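(* The LP fractional mechanism has approximation ratio $1$ for the fractional scheduling problem without money, for any number $n$ of machines and any number $m$ of tasks.
   Context: Fractional scheduling without payments: $n$ machines, $m$ divisible tasks; machine $i$ has private true times $t_{i,j}\ge0$ and declares $\hat t_{i,j}\ge0$. A mechanism outputs fractions $\alpha_{i,j}(\hat{\mathbf t})\in[0,1]$ with $\sum_i\alpha_{i,j}=1$ for every task $j$. Machines are bound by their declarations: machine $i$ executes her fraction of task $j$ for time $\alpha_{i,j}\max\{\hat t_{i,j},t_{i,j}\}$; her cost is $C_i(\hat{\mathbf t})=\sum_j\alpha_{i,j}\max\{\hat t_{i,j},t_{i,j}\}$, and the (fractional) makespan is $\max_i C_i(\hat{\mathbf t})$. A mechanism is truthful if for every $\mathbf t$, $i$, $\hat{\mathbf t}$: $C_i(\mathbf t_i,\hat{\mathbf t}_{-i})\le C_i(\hat{\mathbf t})$. The approximation ratio of a truthful mechanism is the supremum over instances $\mathbf t$ of the makespan under truthful reports $\hat{\mathbf t}=\mathbf t$ divided by the optimal fractional makespan $\min_\alpha\max_i\sum_j\alpha_{i,j}t_{i,j}$. The LP fractional mechanism, on declarations $\hat{\mathbf t}$, outputs as fractions an optimal solution $\alpha(\hat{\mathbf t})$ (selected by a fixed rule among optimal solutions) of the linear program: minimize $\mu$ subject to $\sum_i\alpha_{i,j}=1$ for all $j$, $\mu-\sum_j\alpha_{i,j}\hat t_{i,j}\ge0$ for all $i$, $\alpha_{i,j}\ge0$. *)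

theory Defs
  imports Complex_Main
begin

text \<open>Machines are indexed by i < n, tasks by j < m. A time matrix (true or declared)
  is a function nat \<Rightarrow> nat \<Rightarrow> real; only entries with i < n, j < m matter.\<close>

definition valid_times :: "nat \<Rightarrow> nat \<Rightarrow> (nat \<Rightarrow> nat \<Rightarrow> real) \<Rightarrow> bool" where
  "valid_times n m t \<longleftrightarrow> (\<forall>i<n. \<forall>j<m. t i j \<ge> 0)"

definition feasible_frac :: "nat \<Rightarrow> nat \<Rightarrow> (nat \<Rightarrow> nat \<Rightarrow> real) \<Rightarrow> bool" where
  "feasible_frac n m \<alpha> \<longleftrightarrow>
     (\<forall>i<n. \<forall>j<m. 0 \<le> \<alpha> i j \<and> \<alpha> i j \<le> 1) \<and> (\<forall>j<m. (\<Sum>i<n. \<alpha> i j) = 1)"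

definition frac_makespan :: "nat \<Rightarrow> nat \<Rightarrow> (nat \<Rightarrow> nat \<Rightarrow> real) \<Rightarrow> (nat \<Rightarrow> nat \<Rightarrow> real) \<Rightarrow> real" where
  "frac_makespan n m t \<alpha> = Max ((\<lambda>i. \<Sum>j<m. \<alpha> i j * t i j) ` {..<n})"

definition opt_frac :: "nat \<Rightarrow> nat \<Rightarrow> (nat \<Rightarrow> nat \<Rightarrow> real) \<Rightarrow> real" where
  "opt_frac n m t = Inf {frac_makespan n m t \<alpha> | \<alpha>. feasible_frac n m \<alpha>}"

text \<open>An optimal solution of the LP (min mu s.t. sum_i alpha_ij = 1, mu \<ge> sum_j alpha_ij t_ij,
  alpha \<ge> 0): its optimal mu is the max load, so optimality of (alpha, mu) means alpha is
  feasible and its makespan equals the LP optimum.\<close>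
definition LP_optimal :: "nat \<Rightarrow> nat \<Rightarrow> (nat \<Rightarrow> nat \<Rightarrow> real) \<Rightarrow> (nat \<Rightarrow> nat \<Rightarrow> real) \<Rightarrow> bool" where
  "LP_optimal n m t \<alpha> \<longleftrightarrow> feasible_frac n m \<alpha> \<and> frac_makespan n m t \<alpha> = opt_frac n m t"

text \<open>It is an LP fractional
  mechanism if on every (nonnegative) declaration it outputs an optimal LP solution; the fixed
  selection rule among optimal solutions is the mechanism function itself (arbitrary).\<close>
definition LP_fractional_mechanism ::
  "nat \<Rightarrow> nat \<Rightarrow> ((nat \<Rightarrow> nat \<Rightarrow> real) \<Rightarrow> (nat \<Rightarrow> nat \<Rightarrow> real)) \<Rightarrow> bool" where
  "LP_fractional_mechanism n m A \<longleftrightarrow> (\<forall>th. valid_times n m th \<longrightarrow> LP_optimal n m th (A th))"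

definition mech_cost ::
  "nat \<Rightarrow> ((nat \<Rightarrow> nat \<Rightarrow> real) \<Rightarrow> (nat \<Rightarrow> nat \<Rightarrow> real)) \<Rightarrow> (nat \<Rightarrow> nat \<Rightarrow> real)
     \<Rightarrow> (nat \<Rightarrow> nat \<Rightarrow> real) \<Rightarrow> nat \<Rightarrow> real" where
  "mech_cost m A t th i = (\<Sum>j<m. A th i j * max (th i j) (t i j))"

definition mech_makespan ::
  "nat \<Rightarrow> nat \<Rightarrow> ((nat \<Rightarrow> nat \<Rightarrow> real) \<Rightarrow> (nat \<Rightarrow> nat \<Rightarrow> real)) \<Rightarrow> (nat \<Rightarrow> nat \<Rightarrow> real)
     \<Rightarrow> (nat \<Rightarrow> nat \<Rightarrow> real) \<Rightarrow> real" where
  "mech_makespan n m A t th = Max (mech_cost m A t th ` {..<n})"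

text \<open>Approximation ratio: supremum over instances t of makespan under truthful reports
  divided by the optimal fractional makespan (instances with optimum 0 excluded, 0/0).\<close>
definition approx_ratio ::
  "nat \<Rightarrow> nat \<Rightarrow> ((nat \<Rightarrow> nat \<Rightarrow> real) \<Rightarrow> (nat \<Rightarrow> nat \<Rightarrow> real)) \<Rightarrow> real" where
  "approx_ratio n m A =
     Sup {mech_makespan n m A t t / opt_frac n m t | t. valid_times n m t \<and> opt_frac n m t > 0}"

end

theory Submission
  imports Defs
begin

lemma makespan_lb:
  assumes "n \<ge> 1" "feasible_frac n m \<alpha>"
  shows "real m / real n \<le> frac_makespan n m (\<lambda>i j. 1) \<alpha>"
proof -
  let ?M = "frac_makespan n m (\<lambda>i j. 1) \<alpha>"
  have le: "(\<Sum>j<m. \<alpha> i j) \<le> ?M" if "i < n" for i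
    unfolding frac_makespan_def using that by (intro Max_ge) auto
  have "(\<Sum>i<n. \<Sum>j<m. \<alpha> i j) \<le> (\<Sum>i<n. ?M)"
    by (rule sum_mono) (use le in auto)
  also have "\<dots> = real n * ?M" by simp
  finally have a: "(\<Sum>i<n. \<Sum>j<m. \<alpha> i j) \<le> real n * ?M" .
  have "(\<Sum>i<n. \<Sum>j<m. \<alpha> i j) = (\<Sum>j<m. \<Sum>i<n. \<alpha> i j)" by (rule sum.swap)
  also have "\<dots> = (\<Sum>j<m. 1)" using assms(2) unfolding feasible_frac_def by simp
  also have "\<dots> = real m" by simp
  finally have "real m \<le> real n * ?M" using a by simp
  moreover have "real n > 0" using assms(1) by simp
  ultimately show ?thesis by (simp add: divide_le_eq mult.commute)
qed

theorem theorem5: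
  fixes n m :: nat
    and A :: "(nat \<Rightarrow> nat \<Rightarrow> real) \<Rightarrow> (nat \<Rightarrow> nat \<Rightarrow> real)"
  assumes "n \<ge> 1" and "m \<ge> 1"
    and "LP_fractional_mechanism n m A"
  shows "approx_ratio n m A = 1"
proof -
  have eq: "mech_makespan n m A t t = opt_frac n m t" if "valid_times n m t" for t
  proof -
    have "LP_optimal n m t (A t)" using assms(3) that unfolding LP_fractional_mechanism_def by blast
    then have "frac_makespan n m t (A t) = opt_frac n m t" unfolding LP_optimal_def by blast
    moreover have "mech_makespan n m A t t = frac_makespan n m t (A t)"
      unfolding mech_makespan_def frac_makespan_def mech_cost_def by simp
    ultimately show ?thesis by simp
  qed
  let ?t = "\<lambda>i j. 1 :: real"
  have v: "valid_times n m ?t" unfolding valid_times_def by simp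
  have "LP_optimal n m ?t (A ?t)" using assms(3) v unfolding LP_fractional_mechanism_def by blast
  then have "feasible_frac n m (A ?t)" "frac_makespan n m ?t (A ?t) = opt_frac n m ?t"
    unfolding LP_optimal_def by blast+
  then have "real m / real n \<le> opt_frac n m ?t" using makespan_lb[OF assms(1)] by metis
  moreover have "real m / real n > 0" using assms(1,2) by simp
  ultimately have pos: "opt_frac n m ?t > 0" by linarith
  have "{mech_makespan n m A t t / opt_frac n m t | t. valid_times n m t \<and> opt_frac n m t > 0} = {1}"
  proof
    show "{mech_makespan n m A t t / opt_frac n m t | t. valid_times n m t \<and> opt_frac n m t > 0} \<subseteq> {1}"
      using eq by auto
    show "{1} \<subseteq> {mech_makespan n m A t t / opt_frac n m t | t. valid_times n m t \<and> opt_frac n m t > 0}"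
      using eq[OF v] v pos by (auto intro!: exI[of _ ?t])
  qed
  then show ?thesis unfolding approx_ratio_def by simp
qed

end
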